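(* Let $n\ge2$ and let $A\in\mathbb{R}^{n\times n}$ be a nonnegative weighted shift matrix: $A_{i,i+1}=c_i\ge 0$ for $i=1,\dots,n-1$ and $A_{ij}=0$ otherwise, with $c_i>0$ for at least one $i$. Then $r(t):=r\big((1-t)A+tA^{\top}\big)$ is strictly concave in $t$ on $(0,1)$.
   Context: $r(M)$ denotes the spectral radius of a square matrix $M$; the function $t\mapsto r((1-t)A+tA^\top)$ is called Levinger's function of $A$. *)

theory Defs
  imports "Jordan_Normal_Form.Spectral_Radius"
begin

definition shift_mat :: "nat \<Rightarrow> (nat \<Rightarrow> real) \<Rightarrow> real mat" where
  "shift_mat n c = mat n n (\<lambda>(i, j). if j = Suc i then c i else 0)"

definition levinger :: "real mat \<Rightarrow> real \<Rightarrow> real" where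
  "levinger A t = spectral_radius (map_mat complex_of_real ((1 - t) \<cdot>\<^sub>m A + t \<cdot>\<^sub>m transpose_mat A))"

definition strictly_concave_on :: "real set \<Rightarrow> (real \<Rightarrow> real) \<Rightarrow> bool" where
  "strictly_concave_on S f \<longleftrightarrow>
     (\<forall>x\<in>S. \<forall>y\<in>S. \<forall>u::real. x \<noteq> y \<and> 0 < u \<and> u < 1 \<longrightarrow>
        u * f x + (1 - u) * f y < f (u * x + (1 - u) * y))"

end

theory Submission
  imports Defs
begin


definition dg :: "nat \<Rightarrow> (nat \<Rightarrow> complex) \<Rightarrow> complex mat" where
  "dg n a = mat n n (\<lambda>(i,j). if i = j then a i else 0)"

lemma dg_carrier[simp]: "dg n a \<in> carrier_mat n n" unfolding dg_def by simp

lemma if_mult_zero: "(if P then (a::complex) else 0) * b = (if P then a * b else 0)" by simp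
lemma mult_if_zero: "b * (if P then (a::complex) else 0) = (if P then b * a else 0)" by simp

lemma dg_mult_left: assumes "X \<in> carrier_mat n m"
  shows "dg n a * X = mat n m (\<lambda>(i,j). a i * X $$ (i,j))"
  by (rule eq_matI, insert assms, auto simp: dg_def scalar_prod_def if_mult_zero sum.delta)

lemma dg_mult_right: assumes "X \<in> carrier_mat m n"
  shows "X * dg n a = mat m n (\<lambda>(i,j). X $$ (i,j) * a j)"
  by (rule eq_matI, insert assms, auto simp: dg_def scalar_prod_def mult_if_zero sum.delta')

lemma dg_mult_dg: "dg n a * dg n b = dg n (\<lambda>i. a i * b i)"
  by (subst dg_mult_left[of _ n n], simp, rule eq_matI, auto simp: dg_def)

lemma smult_mult_vec: assumes "A \<in> carrier_mat n m" "v \<in> carrier_vec m" shows "(k \<cdot>\<^sub>m A) *\<^sub>v v = k \<cdot>\<^sub>v (A *\<^sub>v (v :: 'a :: comm_ring_1 vec))"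
  by (rule eq_vecI, insert assms, auto)

lemma eigenvalue_smult: assumes A: "A \<in> carrier_mat n n" and "k \<noteq> (0::complex)"
  shows "eigenvalue (k \<cdot>\<^sub>m A) e \<longleftrightarrow> eigenvalue A (e / k)"
proof -
  have "(k \<cdot>\<^sub>v (A *\<^sub>v v) = e \<cdot>\<^sub>v v) \<longleftrightarrow> (A *\<^sub>v v = (e/k) \<cdot>\<^sub>v v)" for v
  proof
    assume h: "k \<cdot>\<^sub>v (A *\<^sub>v v) = e \<cdot>\<^sub>v v"
    have "A *\<^sub>v v = (1/k) \<cdot>\<^sub>v (k \<cdot>\<^sub>v (A *\<^sub>v v))" using assms by (simp add: smult_smult_assoc)
    also have "\<dots> = (e/k) \<cdot>\<^sub>v v" unfolding h by (simp add: smult_smult_assoc)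
    finally show "A *\<^sub>v v = (e/k) \<cdot>\<^sub>v v" .
  next
    assume h: "A *\<^sub>v v = (e/k) \<cdot>\<^sub>v v"
    show "k \<cdot>\<^sub>v (A *\<^sub>v v) = e \<cdot>\<^sub>v v" unfolding h using assms by (simp add: smult_smult_assoc)
  qed
  thus ?thesis unfolding eigenvalue_def eigenvector_def using A smult_mult_vec[OF A] by (auto, metis)
qed

definition Sc :: "nat \<Rightarrow> (nat \<Rightarrow> real) \<Rightarrow> complex mat" where
  "Sc n c = mat n n (\<lambda>(i,j). if j = Suc i then complex_of_real (c i) else if i = Suc j then complex_of_real (c j) else 0)"

lemma Sc_carrier[simp]: "Sc n c \<in> carrier_mat n n" unfolding Sc_def by simp

lemma rs_facts: assumes "0 < t" "t < (1::real)"
  shows "sqrt ((1-t)/t) > 0" "sqrt ((1-t)/t) * sqrt (t*(1-t)) = 1 - t" "sqrt (t*(1-t)) = t * sqrt ((1-t)/t)"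
proof -
  show "sqrt ((1-t)/t) > 0" using assms by simp
  have "sqrt ((1-t)/t) * sqrt (t*(1-t)) = sqrt ((1-t)^2)" using assms
    by (simp add: real_sqrt_mult[symmetric] power2_eq_square)
  thus "sqrt ((1-t)/t) * sqrt (t*(1-t)) = 1 - t" using assms by simp
  have "t * sqrt ((1-t)/t) = sqrt (t^2) * sqrt ((1-t)/t)" using assms by simp
  also have "\<dots> = sqrt (t*(1-t))" unfolding real_sqrt_mult[symmetric] using assms
    by (simp add: power2_eq_square)
  finally show "sqrt (t*(1-t)) = t * sqrt ((1-t)/t)" by simp
qed

lemma sim_eq: assumes "0 < t" "t < (1::real)"
  defines "r \<equiv> complex_of_real (sqrt ((1-t)/t))" and "s \<equiv> complex_of_real (sqrt (t*(1-t)))"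
  shows "map_mat complex_of_real ((1 - t) \<cdot>\<^sub>m shift_mat n c + t \<cdot>\<^sub>m transpose_mat (shift_mat n c))
    = dg n (\<lambda>i. inverse r ^ i) * (s \<cdot>\<^sub>m Sc n c) * dg n (\<lambda>i. r ^ i)"
proof -
  note rs = rs_facts[OF assms(1,2)]
  have "sqrt ((1-t)/t) \<noteq> 0" using rs(1) by linarith
  hence r0: "r \<noteq> 0" unfolding r_def by simp
  have rs1: "r * s = complex_of_real (1 - t)" using rs(2) unfolding r_def s_def by (metis of_real_mult)
  have rs2: "inverse r * s = complex_of_real t" using rs(3) r0 unfolding r_def s_def
    by (simp add: field_simps)
  have ir: "inverse r ^ i * r ^ i = 1" for i using r0 by (simp add: power_mult_distrib[symmetric])
  have e1: "inverse r ^ i * (s * X) * r ^ Suc i = complex_of_real (1-t) * X" for i X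
  proof -
    have "inverse r ^ i * (s * X) * r ^ Suc i = (inverse r ^ i * r ^ i) * (r*s) * X" by (simp add: ac_simps)
    thus ?thesis using ir rs1 by simp
  qed
  have e2: "inverse r ^ Suc j * (s * X) * r ^ j = complex_of_real t * X" for j X
  proof -
    have "inverse r ^ Suc j * (s * X) * r ^ j = (inverse r ^ j * r ^ j) * (inverse r*s) * X" by (simp add: ac_simps)
    thus ?thesis using ir rs2 by simp
  qed
  have R: "dg n (\<lambda>i. inverse r ^ i) * (s \<cdot>\<^sub>m Sc n c) * dg n (\<lambda>i. r ^ i) = 
     mat n n (\<lambda>(i, j). inverse r ^ i * (s \<cdot>\<^sub>m Sc n c) $$ (i, j) * r ^ j)"
    apply (subst dg_mult_left[of _ n n], simp)
    apply (subst dg_mult_right[of _ n n], simp)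
    by (rule eq_matI, auto)
  show ?thesis unfolding R
  proof (rule eq_matI)
    fix i j assume ij: "i < dim_row (mat n n (\<lambda>(i, j). inverse r ^ i * (s \<cdot>\<^sub>m Sc n c) $$ (i, j) * r ^ j))"
      "j < dim_col (mat n n (\<lambda>(i, j). inverse r ^ i * (s \<cdot>\<^sub>m Sc n c) $$ (i, j) * r ^ j))"
    hence ij: "i < n" "j < n" by auto
    show "map_mat complex_of_real ((1 - t) \<cdot>\<^sub>m shift_mat n c + t \<cdot>\<^sub>m transpose_mat (shift_mat n c)) $$ (i, j) =
         mat n n (\<lambda>(i, j). inverse r ^ i * (s \<cdot>\<^sub>m Sc n c) $$ (i, j) * r ^ j) $$ (i, j)"
    proof (cases "j = Suc i")
      case True
      show ?thesis using ij e1[of i "complex_of_real (c i)"] True by (simp add: shift_mat_def Sc_def, metis)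
    next
      case F1: False
      show ?thesis
      proof (cases "i = Suc j")
        case True
        show ?thesis using ij e2[of j "complex_of_real (c j)"] True by (simp add: shift_mat_def Sc_def, metis)
      next
        case False
        show ?thesis using ij F1 False by (simp add: shift_mat_def Sc_def)
      qed
    qed
  qed (auto simp: shift_mat_def)
qed

lemma dg_one: "dg n (\<lambda>_. 1) = 1\<^sub>m n" by (rule eq_matI, auto simp: dg_def)

lemma lev_eq: assumes n: "n > 0" and t: "0 < t" "t < (1::real)"
  shows "levinger (shift_mat n c) t = sqrt (t*(1-t)) * spectral_radius (Sc n c)"
proof -
  define r where "r = complex_of_real (sqrt ((1-t)/t))"
  define ss where "ss = sqrt (t*(1-t))"
  define s where "s = complex_of_real ss"
  define M where "M = map_mat complex_of_real ((1 - t) \<cdot>\<^sub>m shift_mat n c + t \<cdot>\<^sub>m transpose_mat (shift_mat n c))"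
  note rs = rs_facts[OF t]
  have "sqrt ((1-t)/t) \<noteq> 0" using rs(1) by linarith
  hence r0: "r \<noteq> 0" unfolding r_def by simp
  have ss0: "ss > 0" unfolding ss_def using t by simp
  hence s0: "s \<noteq> 0" unfolding s_def by simp
  have Meq: "M = dg n (\<lambda>i. inverse r ^ i) * (s \<cdot>\<^sub>m Sc n c) * dg n (\<lambda>i. r ^ i)"
    unfolding M_def r_def s_def ss_def by (rule sim_eq[OF t])
  have Mc: "M \<in> carrier_mat n n" unfolding M_def by (simp add: shift_mat_def)
  have SC: "s \<cdot>\<^sub>m Sc n c \<in> carrier_mat n n" by simp
  have "similar_mat M (s \<cdot>\<^sub>m Sc n c)"
    apply (rule similar_matI[of _ _ "dg n (\<lambda>i. inverse r ^ i)" "dg n (\<lambda>i. r ^ i)" n])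
    using Mc SC r0 by (auto simp: dg_mult_dg Meq power_mult_distrib[symmetric] dg_one)
  hence "char_poly M = char_poly (s \<cdot>\<^sub>m Sc n c)" by (rule char_poly_similar)
  hence spM: "spectrum M = spectrum (s \<cdot>\<^sub>m Sc n c)"
    unfolding spectrum_root_char_poly[OF Mc] spectrum_root_char_poly[OF SC] by simp
  have spS: "spectrum (s \<cdot>\<^sub>m Sc n c) = (\<lambda>x. s * x) ` spectrum (Sc n c)"
  proof (rule Set.set_eqI, rule iffI)
    fix e assume "e \<in> spectrum (s \<cdot>\<^sub>m Sc n c)"
    hence "e / s \<in> spectrum (Sc n c)" unfolding spectrum_def using eigenvalue_smult[OF Sc_carrier s0] by simp
    moreover have "e = s * (e / s)" using s0 by simp
    ultimately show "e \<in> (\<lambda>x. s * x) ` spectrum (Sc n c)" by blast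
  next
    fix e assume "e \<in> (\<lambda>x. s * x) ` spectrum (Sc n c)"
    then obtain x where x: "x \<in> spectrum (Sc n c)" "e = s * x" by blast
    thus "e \<in> spectrum (s \<cdot>\<^sub>m Sc n c)" unfolding spectrum_def using eigenvalue_smult[OF Sc_carrier s0] s0 by simp
  qed
  have nS: "norm ` spectrum M = (\<lambda>y. ss * y) ` (norm ` spectrum (Sc n c))"
    unfolding spM spS image_image using ss0 by (simp add: s_def norm_mult)
  have fin: "finite (norm ` spectrum (Sc n c))" using card_finite_spectrum[OF Sc_carrier] by simp
  have ne: "norm ` spectrum (Sc n c) \<noteq> {}" using spectrum_non_empty[OF Sc_carrier n] by simp
  have mono: "mono (\<lambda>y. ss * y)" using ss0 by (auto intro: monoI)
  have "levinger (shift_mat n c) t = Max (norm ` spectrum M)" unfolding levinger_def M_def spectral_radius_def ..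
  also have "\<dots> = ss * spectral_radius (Sc n c)" unfolding nS spectral_radius_def
    by (rule mono_Max_commute[OF mono fin ne, symmetric])
  finally show ?thesis unfolding ss_def .
qed


definition tr :: "nat \<Rightarrow> complex mat \<Rightarrow> complex" where
  "tr n X = (\<Sum>i<n. X $$ (i,i))"

lemma tr_comm: assumes "A \<in> carrier_mat n n" "B \<in> carrier_mat n n"
  shows "tr n (A * B) = tr n (B * A)"
proof -
  have "tr n (A * B) = (\<Sum>i<n. \<Sum>k<n. A $$ (i,k) * B $$ (k,i))"
    unfolding tr_def using assms by (auto simp: scalar_prod_def lessThan_atLeast0 intro!: sum.cong)
  also have "\<dots> = (\<Sum>k<n. \<Sum>i<n. B $$ (k,i) * A $$ (i,k))"
    by (subst sum.swap, simp add: ac_simps)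
  also have "\<dots> = tr n (B * A)"
    unfolding tr_def using assms by (auto simp: scalar_prod_def lessThan_atLeast0 intro!: sum.cong)
  finally show ?thesis .
qed

lemma tr_sim: assumes "P \<in> carrier_mat n n" "X \<in> carrier_mat n n" "Q \<in> carrier_mat n n" "Q * P = 1\<^sub>m n"
  shows "tr n (P * X * Q) = tr n X"
proof -
  have "tr n (P * X * Q) = tr n (Q * (P * X))" using assms by (intro tr_comm) auto
  also have "Q * (P * X) = (Q * P) * X" using assms by (intro assoc_mult_mat[symmetric])
  also have "\<dots> = X" using assms by simp
  finally show ?thesis .
qed

lemma tr_upper_sq: assumes "B \<in> carrier_mat n n" "upper_triangular B" "\<forall>i<n. B $$ (i,i) = 0"
  shows "tr n (B * B) = 0"
proof -
  have "tr n (B * B) = (\<Sum>i<n. \<Sum>k<n. B $$ (i,k) * B $$ (k,i))"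
    unfolding tr_def using assms by (auto simp: scalar_prod_def lessThan_atLeast0 intro!: sum.cong)
  also have "\<dots> = 0"
  proof (intro sum.neutral ballI)
    fix i k assume "i \<in> {..<n}" "k \<in> {..<n}"
    thus "B $$ (i,k) * B $$ (k,i) = 0" using assms unfolding upper_triangular_def
      by (cases "i < k"; cases "k < i"; auto)
  qed
  finally show ?thesis .
qed


lemma Sc_dims[simp]: "dim_row (Sc n c) = n" "dim_col (Sc n c) = n" unfolding Sc_def by auto

lemma rho_pos: assumes "\<forall>i < n - 1. c i \<ge> 0" "\<exists>i < n - 1. c i > 0"
  shows "spectral_radius (Sc n c) > 0"
proof (rule ccontr)
  assume "\<not> spectral_radius (Sc n c) > 0"
  hence rho: "spectral_radius (Sc n c) \<le> 0" by simp
  obtain i0 where i0: "i0 < n - 1" "c i0 > 0" using assms by auto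
  have n: "n > 0" using i0 by simp
  obtain es where es: "char_poly (Sc n c) = (\<Prod> a \<leftarrow> es. [:- a, 1:])" "length es = n"
    using char_poly_factorized[OF Sc_carrier] by blast
  obtain B P Q where BPQ: "schur_decomposition (Sc n c) es = (B,P,Q)" using prod_cases3 by blast
  from schur_decomposition[OF Sc_carrier es(1) BPQ]
  have wit: "similar_mat_wit (Sc n c) B P Q" and ut: "upper_triangular B" and dB: "diag_mat B = es" by blast+
  note W = similar_mat_witD2[OF Sc_carrier wit]
  note car = W(5,6,7)
  note PQ = W(1,2)
  note SB = W(3)
  have e0: "e = 0" if "e \<in> set es" for e
  proof -
    have "poly (char_poly (Sc n c)) e = 0" unfolding es(1) using that
      by (induct es, auto)
    hence "e \<in> spectrum (Sc n c)" unfolding spectrum_root_char_poly[OF Sc_carrier] by simp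
    hence "norm e \<le> spectral_radius (Sc n c)" using spectral_radius_mem_max(2)[OF Sc_carrier n] by auto
    thus "e = 0" using rho by (metis norm_le_zero_iff order_trans)
  qed
  have Bd: "\<forall>i<n. B $$ (i,i) = 0"
  proof (intro allI impI)
    fix i assume "i < n"
    hence "B $$ (i,i) \<in> set (diag_mat B)" using car unfolding diag_mat_def by auto
    thus "B $$ (i,i) = 0" using e0 dB by auto
  qed
  have "Sc n c * Sc n c = P * B * (Q * P) * B * Q" unfolding SB using car by (simp add: assoc_mult_mat[of _ n n _ n _ n])
  also have "\<dots> = P * (B * B) * Q" unfolding PQ using car by simp
  finally have "tr n (Sc n c * Sc n c) = tr n (B * B)" using car PQ by (simp add: tr_sim)
  also have "\<dots> = 0" by (rule tr_upper_sq[OF car(1) ut Bd])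
  finally have tr0: "tr n (Sc n c * Sc n c) = 0" .
  define g where "g i k = (if k = Suc i then c i else if i = Suc k then c k else 0)" for i k
  have Sg: "Sc n c $$ (i,k) = complex_of_real (g i k)" if "i < n" "k < n" for i k
    using that unfolding Sc_def g_def by simp
  have "tr n (Sc n c * Sc n c) = (\<Sum>i<n. \<Sum>k<n. Sc n c $$ (i,k) * Sc n c $$ (k,i))"
    unfolding tr_def using Sc_carrier[of n c] by (auto simp: scalar_prod_def lessThan_atLeast0 intro!: sum.cong)
  also have "\<dots> = complex_of_real (\<Sum>i<n. \<Sum>k<n. (g i k)^2)"
  proof -
    have gs: "g k i = g i k" for i k unfolding g_def by auto
    have "(\<Sum>i<n. \<Sum>k<n. Sc n c $$ (i,k) * Sc n c $$ (k,i)) = (\<Sum>i<n. \<Sum>k<n. complex_of_real ((g i k)^2))"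
      by (intro sum.cong refl, simp add: Sg gs power2_eq_square)
    thus ?thesis by simp
  qed
  finally have X: "tr n (Sc n c * Sc n c) = complex_of_real (\<Sum>i<n. \<Sum>k<n. (g i k)^2)" .
  have "(\<Sum>i<n. \<Sum>k<n. (g i k)^2) = 0" using tr0 X by (metis of_real_eq_0_iff)
  moreover have "(\<Sum>i<n. \<Sum>k<n. (g i k)^2) > 0"
  proof -
    have "(g i0 (Suc i0))^2 \<le> (\<Sum>k<n. (g i0 k)^2)"
      by (rule member_le_sum, insert i0, auto)
    also have "\<dots> \<le> (\<Sum>i<n. \<Sum>k<n. (g i k)^2)"
      by (rule member_le_sum[of _ _ "\<lambda>i. \<Sum>k<n. (g i k)^2"], insert i0, auto intro: sum_nonneg)
    finally show ?thesis using i0 unfolding g_def by (smt (verit) zero_less_power2)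
  qed
  ultimately show False by simp
qed



lemma sqrt_conc: fixes x y u :: real
  assumes "0 < x" "x < 1" "0 < y" "y < 1" "x \<noteq> y" "0 < u" "u < 1"
  shows "u * sqrt (x*(1-x)) + (1-u) * sqrt (y*(1-y)) < sqrt ((u*x+(1-u)*y) * (1 - (u*x+(1-u)*y)))"
proof -
  define p where "p = sqrt (x*(1-x))"
  define q where "q = sqrt (y*(1-y))"
  have pa: "p^2 = x*(1-x)" unfolding p_def using assms by simp
  have qb: "q^2 = y*(1-y)" unfolding q_def using assms by simp
  have "(u*p + (1-u)*q)^2 = u*p^2 + (1-u)*q^2 - u*(1-u)*(p-q)^2" by (simp add: power2_eq_square algebra_simps)
  also have "\<dots> \<le> u*p^2 + (1-u)*q^2" using assms by (simp add: mult_nonneg_nonneg)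
  also have "\<dots> = (u*x+(1-u)*y) * (1 - (u*x+(1-u)*y)) - u*(1-u)*(x-y)^2" unfolding pa qb
    by (simp add: power2_eq_square algebra_simps)
  also have "\<dots> < (u*x+(1-u)*y) * (1 - (u*x+(1-u)*y))" using assms by simp
  finally have "(u*p + (1-u)*q)^2 < (u*x+(1-u)*y) * (1 - (u*x+(1-u)*y))" .
  hence "u*p + (1-u)*q < sqrt ((u*x+(1-u)*y) * (1 - (u*x+(1-u)*y)))" by (rule real_less_rsqrt)
  thus ?thesis unfolding p_def q_def .
qed

theorem theorem5:
  fixes n :: nat and c :: "nat \<Rightarrow> real"
  assumes "n \<ge> 2"
    and "\<forall>i < n - 1. c i \<ge> 0"
    and "\<exists>i < n - 1. c i > 0"
  shows "strictly_concave_on {0<..<1} (levinger (shift_mat n c))"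
proof -
  define R where "R = spectral_radius (Sc n c)"
  have R: "R > 0" unfolding R_def by (rule rho_pos[OF assms(2,3)])
  have n: "n > 0" using assms(1) by simp
  have L: "levinger (shift_mat n c) t = sqrt (t*(1-t)) * R" if "0 < t" "t < 1" for t
    unfolding R_def by (rule lev_eq[OF n that])
  show ?thesis unfolding strictly_concave_on_def
  proof (intro ballI allI impI)
    fix x y u :: real assume x: "x \<in> {0<..<1}" and y: "y \<in> {0<..<1}" and h: "x \<noteq> y \<and> 0 < u \<and> u < 1"
    have z: "0 < u*x+(1-u)*y" "u*x+(1-u)*y < 1"
    proof -
      have "u*x + (1-u)*y > 0" using x y h by (simp add: add_pos_pos)
      moreover have "u*x + (1-u)*y < u*1 + (1-u)*1"
        using x y h by (intro add_less_le_mono mult_strict_left_mono mult_left_mono) auto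
      ultimately show "0 < u*x+(1-u)*y" "u*x+(1-u)*y < 1" by auto
    qed
    have "u * sqrt (x*(1-x)) + (1-u) * sqrt (y*(1-y)) < sqrt ((u*x+(1-u)*y) * (1 - (u*x+(1-u)*y)))"
      using x y h by (intro sqrt_conc) auto
    hence "(u * sqrt (x*(1-x)) + (1-u) * sqrt (y*(1-y))) * R < sqrt ((u*x+(1-u)*y) * (1 - (u*x+(1-u)*y))) * R"
      using R by simp
    thus "u * levinger (shift_mat n c) x + (1 - u) * levinger (shift_mat n c) y
          < levinger (shift_mat n c) (u * x + (1 - u) * y)"
      using x y z by (simp add: L algebra_simps)
  qed
qed

end
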